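(* In the Riemann problem setting of the context, assume the initial data generate a left rarefaction and a right rarefaction, i.e. $p_*\le p_L$ and $p_*\le p_R$. Then for all $K,M\in\{L,R\}$: $$|u_*-u_K|\le[\![u]\!],\qquad 0\le p_K-p_*\le\rho_Ka_K[\![u]\!],\qquad|\rho_{*K}-\rho_M|\le\rho_Ka_K^{-1}[\![u]\!]+|[\![\rho]\!]|.$$
   Context: Let $\gamma\in(1,2]$. Consider the one-dimensional Riemann problem for the complete Euler equations with left and right primitive states $V_K=(\rho_K,u_K,p_K)$, $\rho_K,p_K>0$, $K=L,R$ (transverse velocity components play no role), sound speeds $a_K=\sqrt{\gamma p_K/\rho_K}$, and jumps $[\![\rho]\!]=\rho_R-\rho_L$, $[\![u]\!]=u_R-u_L$, $[\![p]\!]=p_R-p_L$. For $K=L,R$ define $f_K(p)=(p-p_K)\big(\frac{A_K}{p+B_K}\big)^{1/2}$ if $p>p_K$ and $f_K(p)=\frac{2a_K}{\gamma-1}\big[(p/p_K)^{\frac{\gamma-1}{2\gamma}}-1\big]$ if $p\le p_K$, with $A_K=\frac2{(\gamma+1)\rho_K}$, $B_K=\frac{\gamma-1}{\gamma+1}p_K$. The star pressure $p_*$ solves $f_L(p_* )+f_R(p_* )+u_R-u_L=0$ and the star velocity is $u_*=u_L-f_L(p_* )=u_R+f_R(p_* )$. The $K$-wave is a rarefaction if $p_*\le p_K$ and a shock if $p_*>p_K$. The density on the $K$-side of the contact discontinuity is $\rho_{*K}=\rho_K(p_*/p_K)^{1/\gamma}$ if the $K$-wave is a rarefaction, and $\rho_{*K}=\rho_K\frac{p_*/p_K+\frac{\gamma-1}{\gamma+1}}{\frac{\gamma-1}{\gamma+1}p_*/p_K+1}$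 if it is a shock. *)

theory Defs
  imports Complex_Main
begin

datatype side = L | R

definition sound_speed :: "real \<Rightarrow> real \<Rightarrow> real \<Rightarrow> real" where
  "sound_speed \<gamma> \<rho>K pK = sqrt (\<gamma> * pK / \<rho>K)"

text \<open>Toro's pressure function f_K for a wave on side K with state (rho_K, p_K).\<close>
definition fK :: "real \<Rightarrow> real \<Rightarrow> real \<Rightarrow> real \<Rightarrow> real" where
  "fK \<gamma> \<rho>K pK p =
     (if p > pK then
        (p - pK) * sqrt ((2 / ((\<gamma> + 1) * \<rho>K)) / (p + (\<gamma> - 1) / (\<gamma> + 1) * pK))
      else
        2 * sound_speed \<gamma> \<rho>K pK / (\<gamma> - 1) * ((p / pK) powr ((\<gamma> - 1) / (2 * \<gamma>)) - 1))"

definition rho_star :: "real \<Rightarrow> real \<Rightarrow> real \<Rightarrow> real \<Rightarrow> real" where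
  "rho_star \<gamma> \<rho>K pK ps =
     (if ps \<le> pK then \<rho>K * (ps / pK) powr (1 / \<gamma>)
      else \<rho>K * (ps / pK + (\<gamma> - 1) / (\<gamma> + 1)) / ((\<gamma> - 1) / (\<gamma> + 1) * (ps / pK) + 1))"

end

theory Submission
  imports Defs "HOL-Analysis.Analysis"
begin

lemma side_bounds:
  fixes \<gamma> \<rho> pK ps :: real
  assumes g: "1 < \<gamma>" and g2: "\<gamma> \<le> 2" and r: "\<rho> > 0" and pK: "pK > 0" and ps: "ps > 0" "ps \<le> pK"
  shows "fK \<gamma> \<rho> pK ps \<le> 0
     \<and> pK - ps \<le> \<rho> * sound_speed \<gamma> \<rho> pK * (- fK \<gamma> \<rho> pK ps)
     \<and> 0 \<le> rho_star \<gamma> \<rho> pK ps \<and> rho_star \<gamma> \<rho> pK ps \<le> \<rho>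
     \<and> \<rho> - rho_star \<gamma> \<rho> pK ps \<le> \<rho> / sound_speed \<gamma> \<rho> pK * (- fK \<gamma> \<rho> pK ps)"
proof -
  define x where "x = ps / pK"
  define a where "a = sound_speed \<gamma> \<rho> pK"
  define e where "e = (\<gamma> - 1) / (2 * \<gamma>)"
  define y where "y = x powr e"
  define z where "z = x powr (1/\<gamma>)"
  have x0: "0 < x" and x1: "x \<le> 1" using ps pK by (auto simp: x_def)
  have a0: "a > 0" using g r pK by (simp add: a_def sound_speed_def)
  have a2: "a * a = \<gamma> * pK / \<rho>" using g r pK by (simp add: a_def sound_speed_def)
  have e0: "0 < e" "e \<le> 1" using g by (auto simp: e_def field_simps)
  have f: "fK \<gamma> \<rho> pK ps = 2 * a / (\<gamma> - 1) * (y - 1)"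
    using ps by (simp add: fK_def a_def y_def x_def e_def)
  have rs: "rho_star \<gamma> \<rho> pK ps = \<rho> * z"
    using ps by (simp add: rho_star_def z_def x_def)
  have y1: "y \<le> 1" using x0 x1 e0 by (simp add: y_def powr_le1)
  have z1: "z \<le> 1" "0 \<le> z" using x0 x1 g by (auto simp: z_def powr_le1)
  have Y: "y \<le> e * x + (1 - e)"
    using Youngs_inequality_0[of e "1 - e" x 1] e0 x0 by (simp add: y_def)
  have zy: "z powr ((\<gamma> - 1) / 2) = y"
    using x0 g by (simp add: z_def y_def e_def powr_powr mult.commute)
  have Z: "y \<le> (\<gamma> - 1) / 2 * z + (1 - (\<gamma> - 1) / 2)"
    using Youngs_inequality_0[of "(\<gamma> - 1) / 2" "1 - (\<gamma> - 1) / 2" z 1] g g2 z1 zy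
    by (cases "z = 0") (auto simp: z_def y_def)
  have A: "pK - ps \<le> \<rho> * a * (- (2 * a / (\<gamma> - 1) * (y - 1)))"
  proof -
    have "\<rho> * a * (- (2 * a / (\<gamma> - 1) * (y - 1))) = 2 * \<rho> * (a * a) / (\<gamma> - 1) * (1 - y)"
      using g by (simp add: field_simps)
    also have "\<dots> = 2 * (\<gamma> * pK) / (\<gamma> - 1) * (1 - y)"
      using a2 r by (simp add: mult.assoc)
    also have "\<dots> = pK * ((1 - y) / e)" using g by (simp add: e_def field_simps)
    also have "\<dots> \<ge> pK * (1 - x)"
      using Y e0 pK by (intro mult_left_mono) (auto simp: field_simps)
    finally have "pK * (1 - x) \<le> \<rho> * a * (- (2 * a / (\<gamma> - 1) * (y - 1)))" .
    moreover have "pK * (1 - x) = pK - ps" using pK by (simp add: x_def field_simps)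
    ultimately show ?thesis by simp
  qed
  have B: "\<rho> - \<rho> * z \<le> \<rho> / a * (- (2 * a / (\<gamma> - 1) * (y - 1)))"
  proof -
    have "\<rho> / a * (- (2 * a / (\<gamma> - 1) * (y - 1))) = \<rho> * (2 * (1 - y) / (\<gamma> - 1))"
      using a0 g by (simp add: field_simps)
    also have "2 * (1 - y) / (\<gamma> - 1) \<ge> 1 - z"
    proof -
      have "(\<gamma> - 1) * (1 - z) \<le> 2 * (1 - y)" using Z by (simp add: algebra_simps divide_simps)
      thus ?thesis using g by (simp add: field_simps)
    qed
    hence "\<rho> * (2 * (1 - y) / (\<gamma> - 1)) \<ge> \<rho> * (1 - z)" using r by (intro mult_left_mono) auto
    finally show ?thesis by (simp add: algebra_simps)
  qed
  have F: "2 * a / (\<gamma> - 1) * (y - 1) \<le> 0"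
    using a0 g y1 by (intro mult_nonneg_nonpos) auto
  show ?thesis
    unfolding f rs a_def[symmetric] using A B F r z1 by (auto simp: mult_le_cancel_left1)
qed

theorem lemma3p4:
  fixes \<gamma> :: real and \<rho> u p :: "side \<Rightarrow> real" and ps :: real
  assumes "1 < \<gamma>" and "\<gamma> \<le> 2"
    and "\<And>K. \<rho> K > 0" and "\<And>K. p K > 0"
    and "ps > 0"
    and "fK \<gamma> (\<rho> L) (p L) ps + fK \<gamma> (\<rho> R) (p R) ps + u R - u L = 0"
    and "ps \<le> p L" and "ps \<le> p R"
  shows "\<forall>K M. \<bar>(u L - fK \<gamma> (\<rho> L) (p L) ps) - u K\<bar> \<le> u R - u L
            \<and> 0 \<le> p K - ps
            \<and> p K - ps \<le> \<rho> K * sound_speed \<gamma> (\<rho> K) (p K) * (u R - u L)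
            \<and> \<bar>rho_star \<gamma> (\<rho> K) (p K) ps - \<rho> M\<bar>
                \<le> \<rho> K / sound_speed \<gamma> (\<rho> K) (p K) * (u R - u L) + \<bar>\<rho> R - \<rho> L\<bar>"
proof (intro allI)
  fix K M
  have pK: "ps \<le> p K" using assms by (cases K) auto
  note SL = side_bounds[OF assms(1) assms(2) assms(3)[of L] assms(4)[of L] assms(5) assms(7)]
  note SR = side_bounds[OF assms(1) assms(2) assms(3)[of R] assms(4)[of R] assms(5) assms(8)]
  note SK = side_bounds[OF assms(1) assms(2) assms(3)[of K] assms(4)[of K] assms(5) pK]
  have fKge: "- fK \<gamma> (\<rho> K) (p K) ps \<le> u R - u L"
    using SL SR assms(6) by (cases K) auto
  have a0: "sound_speed \<gamma> (\<rho> K) (p K) > 0"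
    using assms(1,3,4) by (simp add: sound_speed_def)
  have c1: "\<rho> K * sound_speed \<gamma> (\<rho> K) (p K) * (- fK \<gamma> (\<rho> K) (p K) ps)
      \<le> \<rho> K * sound_speed \<gamma> (\<rho> K) (p K) * (u R - u L)"
    using fKge a0 assms(3)[of K] by (intro mult_left_mono) auto
  have c2: "\<rho> K / sound_speed \<gamma> (\<rho> K) (p K) * (- fK \<gamma> (\<rho> K) (p K) ps)
      \<le> \<rho> K / sound_speed \<gamma> (\<rho> K) (p K) * (u R - u L)"
    using fKge a0 assms(3)[of K] by (intro mult_left_mono) auto
  have rM: "\<bar>\<rho> K - \<rho> M\<bar> \<le> \<bar>\<rho> R - \<rho> L\<bar>" by (cases K; cases M) auto
  show "\<bar>(u L - fK \<gamma> (\<rho> L) (p L) ps) - u K\<bar> \<le> u R - u L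
            \<and> 0 \<le> p K - ps
            \<and> p K - ps \<le> \<rho> K * sound_speed \<gamma> (\<rho> K) (p K) * (u R - u L)
            \<and> \<bar>rho_star \<gamma> (\<rho> K) (p K) ps - \<rho> M\<bar>
                \<le> \<rho> K / sound_speed \<gamma> (\<rho> K) (p K) * (u R - u L) + \<bar>\<rho> R - \<rho> L\<bar>"
  proof (intro conjI)
    show "\<bar>(u L - fK \<gamma> (\<rho> L) (p L) ps) - u K\<bar> \<le> u R - u L"
      using SL SR assms(6) by (cases K) auto
    show "0 \<le> p K - ps" using pK by simp
    show "p K - ps \<le> \<rho> K * sound_speed \<gamma> (\<rho> K) (p K) * (u R - u L)"
      using SK c1 by linarith
    show "\<bar>rho_star \<gamma> (\<rho> K) (p K) ps - \<rho> M\<bar>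
                \<le> \<rho> K / sound_speed \<gamma> (\<rho> K) (p K) * (u R - u L) + \<bar>\<rho> R - \<rho> L\<bar>"
      using SK c2 rM by linarith
  qed
qed

end
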